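(* Let $N, R \in \mathbb{N}$ and let $g_1,\dots,g_R : [N]\to[N]$ be arbitrary bijections (the single-hop factual recall problem with shared attributes). Then there is a $1$-layer transformer whose MLP has $3$ layers and width $R$, with (learned) embedding dimension $d = 4R\log(N)+1$, that correctly solves the single-hop factual recall problem, i.e. on every input $(s, r)\in[N]\times[R]$ it correctly predicts $y = g_r(s)$. The same can also be achieved without an MLP, by a $1$-layer transformer using multi-head attention with $R$ attention heads of head dimension $d_h = 4\log(N)$ and embedding dimension $d = 4R\log(N) + 4\log(R) + 1$.
   Context: Write $[N]=\{1,\dots,N\}$. Subjects are $[N]$, relations are $[R]$, and each relation $r$ has a bijection $g_r:[N]\to[N]$; attributes live in the same set $[N]$ as subjects (shared codomain). The model is an autoregressive transformer over the vocabulary $[N]\cup[R]$; it receives the sequence $(s, r)$ and must predict the next token $y=g_r(s)$. The token embeddings are free (learnable) vectors in $\mathbb{R}^d$. A transformer layer acts on $X\in\mathbb{R}^{d\times n}$ (columns = token embeddings): each head $h$ computes $A^{(h)}=\mathrm{softmax}((W_K^{(h)}X)^\top(W_Q^{(h)}X))$ (causal), the attention output is $Z=\sum_h W_V^{(h)}X(A^{(h)})^\top$, then $\tilde X = Z + X$, and finally $X' = \tilde X + \mathrm{MLP}(\tilde X)$, where the MLP acts on each column independently and is a ReLU network of the stated number of layers and hidden width. No normalization layers are used. *)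

theory Defs
  imports Complex_Main
begin

(* Vectors in R^n are functions nat => real; only indices < n are meaningful.
   An m x n matrix is a function nat => nat => real (row, column). *)

definition inner_d :: "nat \<Rightarrow> (nat \<Rightarrow> real) \<Rightarrow> (nat \<Rightarrow> real) \<Rightarrow> real" where
  "inner_d n x y = (\<Sum>i<n. x i * y i)"

definition matvec :: "nat \<Rightarrow> nat \<Rightarrow> (nat \<Rightarrow> nat \<Rightarrow> real) \<Rightarrow> (nat \<Rightarrow> real) \<Rightarrow> (nat \<Rightarrow> real)" where
  "matvec m n M x = (\<lambda>i. if i < m then (\<Sum>j<n. M i j * x j) else 0)"

definition vadd :: "(nat \<Rightarrow> real) \<Rightarrow> (nat \<Rightarrow> real) \<Rightarrow> (nat \<Rightarrow> real)" where
  "vadd x y = (\<lambda>i. x i + y i)"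

definition relu_vec :: "nat \<Rightarrow> (nat \<Rightarrow> real) \<Rightarrow> (nat \<Rightarrow> real)" where
  "relu_vec n x = (\<lambda>i. if i < n then max 0 (x i) else 0)"

(* Vocabulary [N] \<union> [R]: Inl s for subjects/attributes s \<in> [N], Inr r for relations r \<in> [R]. *)
definition vocab :: "nat \<Rightarrow> nat \<Rightarrow> (nat + nat) set" where
  "vocab N R = Inl ` {1..N} \<union> Inr ` {1..R}"

(* One causal softmax attention head of head dimension dh in model dimension d,
   evaluated at the last position of the length-2 input (x1, x2).
   Key/query matrices WK, WQ are dh x d; the value map is W_V = W_O V with
   V : dh x d and W_O : d x dh. *)
definition attn_head_last ::
  "nat \<Rightarrow> nat \<Rightarrow> (nat \<Rightarrow> nat \<Rightarrow> real) \<Rightarrow> (nat \<Rightarrow> nat \<Rightarrow> real) \<Rightarrow>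
   (nat \<Rightarrow> nat \<Rightarrow> real) \<Rightarrow> (nat \<Rightarrow> nat \<Rightarrow> real) \<Rightarrow>
   (nat \<Rightarrow> real) \<Rightarrow> (nat \<Rightarrow> real) \<Rightarrow> (nat \<Rightarrow> real)" where
  "attn_head_last d dh WK WQ WO V x1 x2 =
     (let q  = matvec dh d WQ x2;
          s1 = inner_d dh (matvec dh d WK x1) q;
          s2 = inner_d dh (matvec dh d WK x2) q;
          a1 = exp s1 / (exp s1 + exp s2);
          a2 = exp s2 / (exp s1 + exp s2);
          v1 = matvec d dh WO (matvec dh d V x1);
          v2 = matvec d dh WO (matvec dh d V x2)
      in (\<lambda>i. a1 * v1 i + a2 * v2 i))"

definition mlp3 ::
  "nat \<Rightarrow> nat \<Rightarrow> (nat \<Rightarrow> nat \<Rightarrow> real) \<Rightarrow> (nat \<Rightarrow> real) \<Rightarrow>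
   (nat \<Rightarrow> nat \<Rightarrow> real) \<Rightarrow> (nat \<Rightarrow> real) \<Rightarrow>
   (nat \<Rightarrow> nat \<Rightarrow> real) \<Rightarrow> (nat \<Rightarrow> real) \<Rightarrow> (nat \<Rightarrow> real) \<Rightarrow> (nat \<Rightarrow> real)" where
  "mlp3 d w W1 b1 W2 b2 W3 b3 x =
     vadd (matvec d w W3 (relu_vec w (vadd (matvec w w W2 (relu_vec w (vadd (matvec w d W1 x) b1))) b2))) b3"

definition tf_mlp_out ::
  "nat \<Rightarrow> nat \<Rightarrow> (nat + nat \<Rightarrow> nat \<Rightarrow> real) \<Rightarrow>
   (nat \<Rightarrow> nat \<Rightarrow> real) \<Rightarrow> (nat \<Rightarrow> nat \<Rightarrow> real) \<Rightarrow> (nat \<Rightarrow> nat \<Rightarrow> real) \<Rightarrow> (nat \<Rightarrow> nat \<Rightarrow> real) \<Rightarrow>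
   (nat \<Rightarrow> nat \<Rightarrow> real) \<Rightarrow> (nat \<Rightarrow> real) \<Rightarrow>
   (nat \<Rightarrow> nat \<Rightarrow> real) \<Rightarrow> (nat \<Rightarrow> real) \<Rightarrow>
   (nat \<Rightarrow> nat \<Rightarrow> real) \<Rightarrow> (nat \<Rightarrow> real) \<Rightarrow>
   nat + nat \<Rightarrow> nat + nat \<Rightarrow> (nat \<Rightarrow> real)" where
  "tf_mlp_out d w E WK WQ WO V W1 b1 W2 b2 W3 b3 t1 t2 =
     (let xt = vadd (attn_head_last d d WK WQ WO V (E t1) (E t2)) (E t2)
      in vadd xt (mlp3 d w W1 b1 W2 b2 W3 b3 xt))"

definition tf_mha_out ::
  "nat \<Rightarrow> nat \<Rightarrow> nat \<Rightarrow> (nat + nat \<Rightarrow> nat \<Rightarrow> real) \<Rightarrow>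
   (nat \<Rightarrow> nat \<Rightarrow> nat \<Rightarrow> real) \<Rightarrow> (nat \<Rightarrow> nat \<Rightarrow> nat \<Rightarrow> real) \<Rightarrow>
   (nat \<Rightarrow> nat \<Rightarrow> nat \<Rightarrow> real) \<Rightarrow> (nat \<Rightarrow> nat \<Rightarrow> nat \<Rightarrow> real) \<Rightarrow>
   nat + nat \<Rightarrow> nat + nat \<Rightarrow> (nat \<Rightarrow> real)" where
  "tf_mha_out d dh H E WK WQ WO V t1 t2 =
     vadd (\<lambda>i. \<Sum>h\<in>{1..H}. attn_head_last d dh (WK h) (WQ h) (WO h) (V h) (E t1) (E t2) i) (E t2)"

(* Next-token prediction: logits <E v, out> over the whole vocabulary (tied
   embeddings); the prediction is y iff y is the unique argmax. *)
definition predicts :: "nat \<Rightarrow> (nat + nat) set \<Rightarrow> (nat + nat \<Rightarrow> nat \<Rightarrow> real) \<Rightarrow>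
   (nat \<Rightarrow> real) \<Rightarrow> nat + nat \<Rightarrow> bool" where
  "predicts d V E out y \<longleftrightarrow>
     (\<forall>v\<in>V. v \<noteq> y \<longrightarrow> inner_d d (E v) out < inner_d d (E y) out)"

end

theory Submission
  imports Defs
begin


lemma ln2_gt: "1/2 < ln (2::real)"
proof -
  have "exp (1/2::real) * exp (1/2) = exp 1" by (simp flip: exp_add)
  also have "... \<le> 3" by (rule exp_le)
  finally have h: "exp (1/2::real) * exp (1/2) \<le> 3" .
  have "exp (1/2::real) < 2"
  proof (rule ccontr)
    assume "\<not> exp (1/2::real) < 2"
    then have "2 \<le> exp (1/2::real)" by simp
    then have "2*2 \<le> exp (1/2::real) * exp (1/2)" by (intro mult_mono) auto
    with h show False by simp
  qed
  then have "ln (exp (1/2::real)) < ln 2" by (subst ln_less_cancel_iff) auto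
  then show ?thesis by simp
qed

lemma lnN_gt: "N \<ge> 2 \<Longrightarrow> 1/2 < ln (real N)"
proof -
  assume "N \<ge> 2"
  then have "ln 2 \<le> ln (real N)" by (subst ln_le_cancel_iff) auto
  then show ?thesis using ln2_gt by linarith
qed

lemma d1_bound:
  assumes "N \<ge> 2" "R \<ge> 1"
  shows "2*R+2 \<le> nat \<lceil>4 * real R * ln (real N)\<rceil> + 1"
proof -
  have "real (2*R) < 4 * real R * ln (real N)"
    using lnN_gt[OF assms(1)] assms(2) by simp
  then have "int (2*R) < \<lceil>4 * real R * ln (real N)\<rceil>"
    by (simp add: less_ceiling_iff)
  then show ?thesis by linarith
qed

lemma dh_bound:
  assumes "N \<ge> 2"
  shows "3 \<le> nat \<lceil>4 * ln (real N)\<rceil>"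
proof -
  have "2 < 4 * ln (real N)" using lnN_gt[OF assms(1)] by simp
  then have "2 < \<lceil>4 * ln (real N)\<rceil>"
    by (simp add: less_ceiling_iff)
  then show ?thesis by linarith
qed

lemma d2_bound:
  assumes "N \<ge> 2" "R \<ge> 1"
  shows "2*R+2 \<le> R * nat \<lceil>4 * ln (real N)\<rceil> + nat \<lceil>4 * ln (real R)\<rceil> + 1"
proof -
  have "R * 3 \<le> R * nat \<lceil>4 * ln (real N)\<rceil>" using dh_bound[OF assms(1)] by simp
  then show ?thesis using assms(2) by linarith
qed

lemma sum_delta_mult: "(\<Sum>j<(d::nat). (if j = a then c else 0) * f j) = (if a < d then c * f a else (0::real))"
proof -
  have eq: "(\<lambda>j. (if j = a then c else 0) * f j) = (\<lambda>j. if j = a then c * f a else 0)" by auto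
  show ?thesis by (simp only: eq) (simp add: sum.delta sum.delta')
qed

lemma attn_weights:
  fixes s1 s2 :: real
  shows "exp s1 / (exp s1 + exp s2) \<le> exp (s1 - s2)"
    and "1 - exp s1 / (exp s1 + exp s2) \<le> exp (s2 - s1)"
    and "0 \<le> exp s1 / (exp s1 + exp s2)" "exp s1 / (exp s1 + exp s2) \<le> 1"
proof -
  have p1: "exp s1 > 0" "exp s2 > 0" by auto
  have p2: "exp s1 + exp s2 > 0" using p1 by linarith
  show "exp s1 / (exp s1 + exp s2) \<le> exp (s1 - s2)"
  proof -
    have "exp s1 / (exp s1 + exp s2) \<le> exp s1 / exp s2"
      using p1 p2 by (intro divide_left_mono mult_pos_pos) auto
    then show ?thesis by (simp add: exp_diff)
  qed
  have "1 - exp s1 / (exp s1 + exp s2) = exp s2 / (exp s1 + exp s2)"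
    using p1 p2 by (simp add: divide_simps)
  also have "... \<le> exp s2 / exp s1"
      using p1 p2 by (intro divide_left_mono mult_pos_pos) auto
  also have "... = exp (s2 - s1)" by (simp add: exp_diff)
  finally show "1 - exp s1 / (exp s1 + exp s2) \<le> exp (s2 - s1)" .
  show "0 \<le> exp s1 / (exp s1 + exp s2)" using p1(1) p2 by (intro divide_nonneg_pos) auto
  show "exp s1 / (exp s1 + exp s2) \<le> 1" using p1 p2 by (simp add: divide_simps)
qed

lemma sum_two: "2 \<le> (d::nat) \<Longrightarrow> (\<forall>i. 2 \<le> i \<longrightarrow> f i = 0) \<Longrightarrow> (\<Sum>i<d. f i) = f 0 + (f 1 :: real)"
proof -
  assume d: "2 \<le> d" and z: "\<forall>i. 2 \<le> i \<longrightarrow> f i = 0"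
  have "(\<Sum>i<d. f i) = (\<Sum>i\<in>{0,1}. f i)"
    by (rule sum.mono_neutral_right) (use d z in auto)
  then show ?thesis by simp
qed



definition E2 :: "nat \<Rightarrow> nat \<Rightarrow> (nat \<Rightarrow> nat \<Rightarrow> nat) \<Rightarrow> nat + nat \<Rightarrow> nat \<Rightarrow> real" where
  "E2 N R g t = (case t of
      Inl x \<Rightarrow> (\<lambda>i. (if i = 0 then real x else if i = 1 then - (8 * (real x)^2)
                    else if 2 \<le> i \<and> i \<le> R+1 then real (g (i-1) x) else 0))
    | Inr r \<Rightarrow> (\<lambda>i. (if i = 1 then 1 else if i = R+1+r then 1 else 0)))"

definition WK2 :: "nat \<Rightarrow> nat \<Rightarrow> nat \<Rightarrow> nat \<Rightarrow> real" where
  "WK2 R h = (\<lambda>i j. if i = 0 then (if j = 1+h then 1 else 0)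
      else if i = 1 then (if R+2 \<le> j \<and> j \<le> 2*R+1 then 1 else 0) else 0)"
definition WQ2 :: "real \<Rightarrow> nat \<Rightarrow> nat \<Rightarrow> nat \<Rightarrow> nat \<Rightarrow> real" where
  "WQ2 lam R h = (\<lambda>i j. if i = 0 then (if j = R+1+h then 2*lam else 0)
      else if i = 1 then (if R+2 \<le> j \<and> j \<le> 2*R+1 then lam else 0) else 0)"
definition V2 :: "nat \<Rightarrow> nat \<Rightarrow> nat \<Rightarrow> real" where
  "V2 h = (\<lambda>i j. if i = 0 then (if j = 1+h then 1 else 0) else 0)"
definition WO2 :: "nat \<Rightarrow> nat \<Rightarrow> nat \<Rightarrow> real" where
  "WO2 h = (\<lambda>i j. if i = 0 then (if j = 0 then 16 else 0) else 0)"

lemma sum_delta_eq: "(\<And>j. j < d \<Longrightarrow> f j = (if j = a then c else 0)) \<Longrightarrow> a < (d::nat) \<Longrightarrow> (\<Sum>j<d. f j) = (c::real)"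
proof -
  assume h: "\<And>j. j < d \<Longrightarrow> f j = (if j = a then c else 0)" and a: "a < d"
  have "(\<Sum>j<d. f j) = (\<Sum>j<d. (if j = a then c else 0))" by (rule sum.cong) (use h in auto)
  then show ?thesis using a by simp
qed

lemma sum_zero: "(\<And>j. j < d \<Longrightarrow> f j = 0) \<Longrightarrow> (\<Sum>j<(d::nat). f j) = (0::real)"
  by (rule sum.neutral) auto

context
  fixes N R d dh :: nat and g :: "nat \<Rightarrow> nat \<Rightarrow> nat" and lam :: real and s r h :: nat
  assumes d: "2*R+2 \<le> d" and dh: "2 \<le> dh" and s: "s \<in> {1..N}" and r: "r \<in> {1..R}" and h: "h \<in> {1..R}"
begin

lemma K_s: "matvec dh d (WK2 R h) (E2 N R g (Inl s)) = (\<lambda>i. if i = 0 then real (g h s) else 0)"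
proof
  fix i
  show "matvec dh d (WK2 R h) (E2 N R g (Inl s)) i = (if i = 0 then real (g h s) else 0)"
  proof (cases "i = 0")
    case True
    then show ?thesis unfolding matvec_def using dh d h
      by (auto simp: WK2_def E2_def intro!: sum_delta_eq)
  next
    case False
    then show ?thesis unfolding matvec_def using dh d h
      by (auto simp: WK2_def E2_def intro!: sum_zero)
  qed
qed

lemma K_r: "matvec dh d (WK2 R h) (E2 N R g (Inr r)) = (\<lambda>i. if i = 1 then 1 else 0)"
proof
  fix i
  show "matvec dh d (WK2 R h) (E2 N R g (Inr r)) i = (if i = 1 then 1 else 0)"
  proof (cases "i = 1")
    case True
    then show ?thesis unfolding matvec_def using dh d h r
      by (auto simp: WK2_def E2_def intro!: sum_delta_eq[where a="R+1+r"])
  next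
    case False
    then show ?thesis unfolding matvec_def using dh d h r
      by (auto simp: WK2_def E2_def intro!: sum_zero)
  qed
qed

lemma Q_r: "matvec dh d (WQ2 lam R h) (E2 N R g (Inr r)) =
   (\<lambda>i. if i = 0 then (if r = h then 2*lam else 0) else if i = 1 then lam else 0)"
proof
  fix i
  show "matvec dh d (WQ2 lam R h) (E2 N R g (Inr r)) i = (if i = 0 then (if r = h then 2*lam else 0) else if i = 1 then lam else 0)"
  proof (cases "i = 0 \<or> i = 1")
    case True
    then show ?thesis unfolding matvec_def using dh d h r
      by (auto simp: WQ2_def E2_def intro!: sum_delta_eq[where a="R+1+r"] sum_zero)
  next
    case False
    then show ?thesis unfolding matvec_def using dh d h r
      by (auto simp: WQ2_def E2_def intro!: sum_zero)
  qed
qed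

lemma V_s: "matvec d dh (WO2 h) (matvec dh d (V2 h) (E2 N R g (Inl s))) = (\<lambda>i. if i = 0 then 16 * real (g h s) else 0)"
proof -
  have a: "matvec dh d (V2 h) (E2 N R g (Inl s)) = (\<lambda>i. if i = 0 then real (g h s) else 0)"
  proof
    fix i
    show "matvec dh d (V2 h) (E2 N R g (Inl s)) i = (if i = 0 then real (g h s) else 0)"
      unfolding matvec_def using dh d h
      by (cases "i = 0") (auto simp: V2_def E2_def intro!: sum_delta_eq sum_zero)
  qed
  show ?thesis unfolding a
  proof
    fix i
    show "matvec d dh (WO2 h) (\<lambda>i. if i = 0 then real (g h s) else 0) i = (if i = 0 then 16 * real (g h s) else 0)"
      unfolding matvec_def using dh d h
      by (cases "i = 0") (auto simp: WO2_def intro!: sum_delta_eq sum_zero)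
  qed
qed

lemma V_r: "matvec d dh (WO2 h) (matvec dh d (V2 h) (E2 N R g (Inr r))) = (\<lambda>i. 0)"
proof -
  have a: "matvec dh d (V2 h) (E2 N R g (Inr r)) = (\<lambda>i. 0)"
  proof
    fix i
    show "matvec dh d (V2 h) (E2 N R g (Inr r)) i = 0"
      unfolding matvec_def using dh d h r
      by (auto simp: V2_def E2_def intro!: sum_zero)
  qed
  show ?thesis unfolding a by (auto simp: matvec_def)
qed

lemma head_eq: "attn_head_last d dh (WK2 R h) (WQ2 lam R h) (WO2 h) (V2 h) (E2 N R g (Inl s)) (E2 N R g (Inr r))
  = (\<lambda>i. if i = 0 then (exp (real (g h s) * (if r = h then 2*lam else 0)) /
             (exp (real (g h s) * (if r = h then 2*lam else 0)) + exp lam)) * (16 * real (g h s)) else 0)"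
proof -
  have s1: "inner_d dh (\<lambda>i. if i = 0 then real (g h s) else 0)
         (\<lambda>i. if i = 0 then (if r = h then 2*lam else 0) else if i = 1 then lam else 0)
       = real (g h s) * (if r = h then 2*lam else 0)"
    unfolding inner_d_def by (subst sum_two) (use dh in auto)
  have s2: "inner_d dh (\<lambda>i. if i = 1 then 1 else 0)
         (\<lambda>i. if i = 0 then (if r = h then 2*lam else 0) else if i = 1 then lam else 0)
       = lam"
    unfolding inner_d_def by (subst sum_two) (use dh in auto)
  show ?thesis
    unfolding attn_head_last_def Let_def K_s K_r Q_r V_s V_r s1 s2
    by auto
qed

end


definition aw :: "real \<Rightarrow> (nat \<Rightarrow> nat \<Rightarrow> nat) \<Rightarrow> nat \<Rightarrow> nat \<Rightarrow> nat \<Rightarrow> real" where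
  "aw lam g s r h = exp (real (g h s) * (if r = h then 2*lam else 0)) /
             (exp (real (g h s) * (if r = h then 2*lam else 0)) + exp lam)"

lemma out2:
  assumes d: "2*R+2 \<le> d" and dh: "2 \<le> dh" and s: "s \<in> {1..N}" and r: "r \<in> {1..R}"
  shows "tf_mha_out d dh R (E2 N R g) (WK2 R) (WQ2 lam R) WO2 V2 (Inl s) (Inr r)
    = (\<lambda>i. (if i = 0 then 16 * (\<Sum>h\<in>{1..R}. aw lam g s r h * real (g h s)) else 0) + E2 N R g (Inr r) i)"
proof
  fix i
  have "(\<Sum>h\<in>{1..R}. attn_head_last d dh (WK2 R h) (WQ2 lam R h) (WO2 h) (V2 h) (E2 N R g (Inl s)) (E2 N R g (Inr r)) i)
     = (\<Sum>h\<in>{1..R}. (if i = 0 then aw lam g s r h * (16 * real (g h s)) else 0))"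
  proof (rule sum.cong)
    fix h assume h: "h \<in> {1..R}"
    show "attn_head_last d dh (WK2 R h) (WQ2 lam R h) (WO2 h) (V2 h) (E2 N R g (Inl s)) (E2 N R g (Inr r)) i
        = (if i = 0 then aw lam g s r h * (16 * real (g h s)) else 0)"
      unfolding head_eq[OF d dh s r h] aw_def by simp
  qed simp
  also have "... = (if i = 0 then 16 * (\<Sum>h\<in>{1..R}. aw lam g s r h * real (g h s)) else 0)"
    by (simp add: sum_distrib_left algebra_simps)
  finally show "tf_mha_out d dh R (E2 N R g) (WK2 R) (WQ2 lam R) WO2 V2 (Inl s) (Inr r) i
    = (if i = 0 then 16 * (\<Sum>h\<in>{1..R}. aw lam g s r h * real (g h s)) else 0) + E2 N R g (Inr r) i"
    unfolding tf_mha_out_def vadd_def by simp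
qed

lemma Mbound:
  assumes s: "s \<in> {1..N}" and r: "r \<in> {1..R}" and gr: "\<forall>h\<in>{1..R}. g h s \<in> {1..N}"
    and lam: "lam = 4 * real R * real N"
  shows "\<bar>(\<Sum>h\<in>{1..R}. aw lam g s r h * real (g h s)) - real (g r s)\<bar> \<le> 1/4"
proof -
  have N0: "real N \<ge> 1" using s by auto
  have R0: "real R \<ge> 1" using r by auto
  have lam0: "lam \<ge> 0" using lam by simp
  have each: "\<bar>aw lam g s r h - (if h = r then 1 else 0)\<bar> \<le> exp (- lam)" if h: "h \<in> {1..R}" for h
  proof (cases "h = r")
    case True
    let ?s1 = "real (g h s) * (2*lam)"
    have g1: "real (g h s) \<ge> 1" using gr h by auto
    have "1 * (2*lam) \<le> ?s1" using g1 lam0 by (intro mult_right_mono) auto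
    then have "?s1 \<ge> 2 * lam" by simp
    then have e: "exp (lam - ?s1) \<le> exp (- lam)" by simp
    have "aw lam g s r h = exp ?s1 / (exp ?s1 + exp lam)" using True by (simp add: aw_def)
    moreover have "1 - exp ?s1 / (exp ?s1 + exp lam) \<le> exp (- lam)"
      using attn_weights(2)[of ?s1 lam] e by linarith
    moreover have "exp ?s1 / (exp ?s1 + exp lam) \<le> 1" by (rule attn_weights(4))
    ultimately show ?thesis using True by (simp add: abs_le_iff)
  next
    case False
    have "aw lam g s r h = exp 0 / (exp 0 + exp lam)" using False by (simp add: aw_def)
    moreover have "exp 0 / (exp 0 + exp lam) \<le> exp (- lam)"
      using attn_weights(1)[of 0 lam] by simp
    moreover have "0 \<le> exp 0 / (exp 0 + exp lam)" by (rule attn_weights(3))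
    ultimately show ?thesis using False by (simp add: abs_le_iff)
  qed
  have z: "real (g r s) = (\<Sum>h\<in>{1..R}. (if h = r then 1 else 0) * real (g h s))"
    using r by (simp add: if_distrib[of "\<lambda>x. x * _"] cong: if_cong)
  have "\<bar>(\<Sum>h\<in>{1..R}. aw lam g s r h * real (g h s)) - real (g r s)\<bar>
      = \<bar>\<Sum>h\<in>{1..R}. (aw lam g s r h - (if h = r then 1 else 0)) * real (g h s)\<bar>"
    by (subst z) (simp add: sum_subtractf left_diff_distrib)
  also have "... \<le> (\<Sum>h\<in>{1..R}. \<bar>(aw lam g s r h - (if h = r then 1 else 0)) * real (g h s)\<bar>)"
    by (rule sum_abs)
  also have "... \<le> (\<Sum>h\<in>{1..R}. exp (- lam) * real N)"
  proof (rule sum_mono)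
    fix h assume h: "h \<in> {1..R}"
    have gN: "real (g h s) \<le> real N" "real (g h s) \<ge> 0" using gr h by auto
    show "\<bar>(aw lam g s r h - (if h = r then 1 else 0)) * real (g h s)\<bar> \<le> exp (- lam) * real N"
      unfolding abs_mult using each[OF h] gN by (intro mult_mono) auto
  qed
  also have "... = real R * real N * exp (- lam)" by simp
  also have "... \<le> 1/4"
  proof -
    have "1 + lam \<le> exp lam" by (rule exp_ge_add_one_self)
    then have "lam \<le> exp lam" by linarith
    then have "4 * real R * real N \<le> exp lam" using lam by simp
    then have "real R * real N \<le> exp lam / 4" by simp
    then show ?thesis by (simp add: exp_minus field_simps)
  qed
  finally show ?thesis .
qed


lemma quad_pos:
  fixes t e :: real
  assumes t: "1 \<le> \<bar>t\<bar>" and e: "\<bar>e\<bar> \<le> 1/4"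
  shows "0 < t^2 + 2 * t * e"
proof -
  have a: "\<bar>t * e\<bar> \<le> \<bar>t\<bar> * (1/4)" unfolding abs_mult by (rule mult_left_mono) (use e in auto)
  have b: "\<bar>t\<bar> * 1 \<le> \<bar>t\<bar> * \<bar>t\<bar>" by (rule mult_left_mono) (use t in auto)
  have c: "t^2 = \<bar>t\<bar> * \<bar>t\<bar>" by (simp add: power2_eq_square abs_mult_self_eq)
  show ?thesis using a b c t by (simp add: abs_le_iff) linarith
qed

lemma pred2:
  assumes d: "2*R+2 \<le> d" and dh: "2 \<le> dh" and s: "s \<in> {1..N}" and r: "r \<in> {1..R}"
    and gr: "\<forall>h\<in>{1..R}. g h s \<in> {1..N}" and lam: "lam = 4 * real R * real N"
  shows "predicts d (vocab N R) (E2 N R g)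
     (tf_mha_out d dh R (E2 N R g) (WK2 R) (WQ2 lam R) WO2 V2 (Inl s) (Inr r)) (Inl (g r s))"
proof -
  define M where "M = (\<Sum>h\<in>{1..R}. aw lam g s r h * real (g h s))"
  define Ou where "Ou = (\<lambda>i. (if i = 0 then 16 * M else 0) + E2 N R g (Inr r) i)"
  define z where "z = g r s"
  have eqO: "tf_mha_out d dh R (E2 N R g) (WK2 R) (WQ2 lam R) WO2 V2 (Inl s) (Inr r) = Ou"
    unfolding Ou_def M_def by (rule out2) (rule d, rule dh, rule s, rule r)
  have Mb: "\<bar>M - real z\<bar> \<le> 1/4" unfolding M_def z_def by (rule Mbound) (rule s, rule r, rule gr, rule lam)
  have z: "1 \<le> z" "z \<le> N" using gr r by (auto simp: z_def)
  have subj: "inner_d d (E2 N R g (Inl y)) Ou = 16 * M * real y - 8 * (real y)^2" for y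
  proof -
    have "inner_d d (E2 N R g (Inl y)) Ou = E2 N R g (Inl y) 0 * Ou 0 + E2 N R g (Inl y) 1 * Ou 1"
      unfolding inner_d_def
      by (rule sum_two) (use d r in \<open>auto simp: E2_def Ou_def\<close>)
    then show ?thesis using r by (simp add: E2_def Ou_def)
  qed
  have rel: "inner_d d (E2 N R g (Inr r')) Ou \<le> 2" if r': "r' \<in> {1..R}" for r'
  proof -
    have "inner_d d (E2 N R g (Inr r')) Ou = (\<Sum>i\<in>{1, R+1+r'}. E2 N R g (Inr r') i * Ou i)"
      unfolding inner_d_def
      by (rule sum.mono_neutral_right) (use d r' in \<open>auto simp: E2_def\<close>)
    also have "... = Ou 1 + Ou (R+1+r')" using r' by (simp add: E2_def)
    also have "... = 1 + (if r' = r then 1 else 0)" using r' r by (auto simp: Ou_def E2_def)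
    also have "... \<le> 2" by simp
    finally show ?thesis .
  qed
  have top: "inner_d d (E2 N R g (Inl z)) Ou = 8 * ((real z)^2 + 2 * real z * (M - real z))"
    by (simp add: subj power2_eq_square algebra_simps)
  have top4: "4 \<le> 8 * ((real z)^2 + 2 * real z * (M - real z))"
  proof -
    have "1 \<le> \<bar>real z\<bar>" using z by simp
    have a: "\<bar>real z * (M - real z)\<bar> \<le> real z * (1/4)"
      unfolding abs_mult abs_of_nat using Mb z by (intro mult_left_mono) auto
    have b: "real z * 1 \<le> real z * real z" by (rule mult_left_mono) (use z in auto)
    have c: "- (real z * (1/4)) \<le> real z * (M - real z)" using a by (simp only: abs_le_iff) linarith
    have zz: "1 \<le> real z" using z by simp
    have m: "2 * real z * (M - real z) = 2 * (real z * (M - real z))" by simp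
    show ?thesis unfolding power2_eq_square m using b c zz by argo
  qed
  show ?thesis
    unfolding predicts_def eqO z_def[symmetric]
  proof
    fix v assume v: "v \<in> vocab N R"
    show "v \<noteq> Inl z \<longrightarrow> inner_d d (E2 N R g v) Ou < inner_d d (E2 N R g (Inl z)) Ou"
    proof
      assume vz: "v \<noteq> Inl z"
      from v consider (l) y where "v = Inl y" "y \<in> {1..N}" | (rr) r' where "v = Inr r'" "r' \<in> {1..R}"
        unfolding vocab_def by auto
      then show "inner_d d (E2 N R g v) Ou < inner_d d (E2 N R g (Inl z)) Ou"
      proof cases
        case l
        then have "y \<noteq> z" using vz by auto
        then have t: "1 \<le> \<bar>real z - real y\<bar>" by linarith
        have "0 < (real z - real y)^2 + 2 * (real z - real y) * (M - real z)"
          by (rule quad_pos[OF t Mb])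
        then show ?thesis unfolding l(1) subj by (simp add: power2_eq_square algebra_simps)
      next
        case rr
        then show ?thesis using rel[OF rr(2)] top top4 by simp
      qed
    qed
  qed
qed



definition E1 :: "nat \<Rightarrow> nat \<Rightarrow> (nat \<Rightarrow> nat \<Rightarrow> nat) \<Rightarrow> nat + nat \<Rightarrow> nat \<Rightarrow> real" where
  "E1 N R g t = (case t of
      Inl x \<Rightarrow> (\<lambda>i. (if i = 0 then real x else if i = 1 then - ((real x)^2)
                    else if 2 \<le> i \<and> i \<le> R+1 then real (g (i-1) x) else 0))
    | Inr r \<Rightarrow> (\<lambda>i. (if i = R+1+r then 1 else 0)))"

definition Zm :: "nat \<Rightarrow> nat \<Rightarrow> real" where "Zm = (\<lambda>i j. 0)"
definition Idm :: "nat \<Rightarrow> nat \<Rightarrow> real" where "Idm = (\<lambda>i j. if j = i then 1 else 0)"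
definition WO1 :: "nat \<Rightarrow> nat \<Rightarrow> nat \<Rightarrow> nat \<Rightarrow> real" where
  "WO1 N R = (\<lambda>i j. if (R+2 \<le> i \<and> i \<le> 2*R+1) \<and> j = i - R then 2 / real N else 0)"
definition W11 :: "nat \<Rightarrow> nat \<Rightarrow> nat \<Rightarrow> nat \<Rightarrow> real" where
  "W11 N R = (\<lambda>k j. if True \<and> j = R+2+k then real N else 0)"
definition b11 :: "nat \<Rightarrow> nat \<Rightarrow> real" where "b11 N = (\<lambda>k. - real N)"
definition W31 :: "nat \<Rightarrow> nat \<Rightarrow> real" where "W31 = (\<lambda>i k. if i = 0 then 6 else 0)"
definition b31 :: "nat \<Rightarrow> real" where "b31 = (\<lambda>i. if i = 1 then 3 else 0)"

lemma sum_delta_cond: "(\<Sum>j<(d::nat). (if P \<and> j = a then c else 0) * f j) = (if P \<and> a < d then c * f a else (0::real))"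
  using sum_delta_mult[where d=d and a=a and c=c and f=f] by (cases P) auto

lemma matvec_Zm: "matvec m n Zm x = (\<lambda>i. 0)"
  by (auto simp: matvec_def Zm_def)

lemma matvec_Idm: "matvec n n Idm x = (\<lambda>i. if i < n then x i else 0)"
  by (auto simp: matvec_def Idm_def sum_delta_mult)

lemma attn1:
  assumes d: "2*R+2 \<le> d" and s: "s \<in> {1..N}" and r: "r \<in> {1..R}"
  shows "attn_head_last d d Zm Zm (WO1 N R) Idm (E1 N R g (Inl s)) (E1 N R g (Inr r))
     = (\<lambda>i. if (R+2 \<le> i \<and> i \<le> 2*R+1) then real (g (i-R-1) s) / real N else 0)"
proof -
  have v1: "matvec d d (WO1 N R) (matvec d d Idm (E1 N R g (Inl s)))
      = (\<lambda>i. if (R+2 \<le> i \<and> i \<le> 2*R+1) then 2 * real (g (i-R-1) s) / real N else 0)"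
  proof
    fix i
    show "matvec d d (WO1 N R) (matvec d d Idm (E1 N R g (Inl s))) i
      = (if (R+2 \<le> i \<and> i \<le> 2*R+1) then 2 * real (g (i-R-1) s) / real N else 0)"
      unfolding matvec_Idm using d
      apply (simp add: matvec_def WO1_def sum_delta_cond sum_delta_mult)
      apply (auto simp: E1_def)
      done
  qed
  have v2: "matvec d d (WO1 N R) (matvec d d Idm (E1 N R g (Inr r))) = (\<lambda>i. 0)"
  proof
    fix i
    show "matvec d d (WO1 N R) (matvec d d Idm (E1 N R g (Inr r))) i = 0"
      unfolding matvec_Idm using d r
      by (auto simp: matvec_def WO1_def E1_def intro!: sum.neutral)
  qed
  show ?thesis
    unfolding attn_head_last_def Let_def matvec_Zm v1 v2
    by (auto simp: inner_d_def)
qed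

lemma out1:
  assumes d: "2*R+2 \<le> d" and s: "s \<in> {1..N}" and r: "r \<in> {1..R}"
    and gr: "\<forall>h\<in>{1..R}. g h s \<in> {1..N}"
  shows "tf_mlp_out d R (E1 N R g) Zm Zm (WO1 N R) Idm (W11 N R) (b11 N) Idm (\<lambda>k. 0) W31 b31 (Inl s) (Inr r)
    = (\<lambda>i. (if (R+2 \<le> i \<and> i \<le> 2*R+1) then real (g (i-R-1) s) / real N else 0)
          + (if i = R+1+r then 1 else 0)
          + ((if i = 0 then 6 * real (g r s) else 0) + (if i = 1 then 3 else 0)))"
    (is "_ = ?out")
proof -
  define xt where "xt = (\<lambda>i. (if (R+2 \<le> i \<and> i \<le> 2*R+1) then real (g (i-R-1) s) / real N else 0)
          + (if i = R+1+r then (1::real) else 0))"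
  have N0: "real N > 0" using s by auto
  have xt_eq: "vadd (attn_head_last d d Zm Zm (WO1 N R) Idm (E1 N R g (Inl s)) (E1 N R g (Inr r))) (E1 N R g (Inr r)) = xt"
    unfolding attn1[OF d s r] by (auto simp: vadd_def xt_def E1_def)
  define h1 where "h1 = (\<lambda>k. if k = r - 1 then real (g r s) else (0::real))"
  have grs: "1 \<le> g r s" "g r s \<le> N" using gr r by auto
  have h1_eq: "relu_vec R (vadd (matvec R d (W11 N R) xt) (b11 N)) = h1"
  proof
    fix k
    show "relu_vec R (vadd (matvec R d (W11 N R) xt) (b11 N)) k = h1 k"
    proof (cases "k < R")
      case False
      then show ?thesis using r by (auto simp: relu_vec_def h1_def)
    next
      case True
      have "matvec R d (W11 N R) xt k = real N * xt (R+2+k)"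
        using True d by (simp add: matvec_def W11_def sum_delta_mult)
      also have "... = real (g (k+1) s) + (if k + 1 = r then real N else 0)"
        using True N0 by (auto simp: xt_def field_simps)
      finally have m: "matvec R d (W11 N R) xt k = real (g (k+1) s) + (if k + 1 = r then real N else 0)" .
      have gk: "g (k+1) s \<le> N" using gr True by auto
      show ?thesis
        using True m gk grs r by (auto simp: relu_vec_def vadd_def b11_def h1_def)
    qed
  qed
  have h2_eq: "relu_vec R (vadd (matvec R R Idm h1) (\<lambda>k. 0)) = h1"
    using r by (auto simp: relu_vec_def vadd_def matvec_Idm h1_def fun_eq_iff)
  have m_eq: "vadd (matvec d R W31 h1) b31 = (\<lambda>i. (if i = 0 then 6 * real (g r s) else 0) + (if i = 1 then 3 else 0))"
  proof
    fix i
    have "(\<Sum>k<R. W31 i k * h1 k) = (if i = 0 then 6 * real (g r s) else 0)"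
    proof -
      have e: "(\<lambda>k. W31 i k * h1 k) = (\<lambda>k. if k = r - 1 then (if i = 0 then 6 * real (g r s) else 0) else 0)"
        by (auto simp: W31_def h1_def)
      have "r - 1 < R" using r by auto
      then show ?thesis by (simp only: e) simp
    qed
    then show "vadd (matvec d R W31 h1) b31 i = (if i = 0 then 6 * real (g r s) else 0) + (if i = 1 then 3 else 0)"
      using d by (auto simp: vadd_def matvec_def b31_def)
  qed
  show ?thesis
    unfolding tf_mlp_out_def Let_def xt_eq mlp3_def h1_eq h2_eq m_eq
    by (auto simp: vadd_def xt_def)
qed

lemma pred1:
  assumes d: "2*R+2 \<le> d" and s: "s \<in> {1..N}" and r: "r \<in> {1..R}"
    and gr: "\<forall>h\<in>{1..R}. g h s \<in> {1..N}"
  shows "predicts d (vocab N R) (E1 N R g)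
     (tf_mlp_out d R (E1 N R g) Zm Zm (WO1 N R) Idm (W11 N R) (b11 N) Idm (\<lambda>k. 0) W31 b31 (Inl s) (Inr r))
     (Inl (g r s))"
proof -
  define Ou where "Ou = (\<lambda>i. (if (R+2 \<le> i \<and> i \<le> 2*R+1) then real (g (i-R-1) s) / real N else 0)
          + (if i = R+1+r then 1 else 0)
          + ((if i = 0 then 6 * real (g r s) else 0) + (if i = 1 then (3::real) else 0)))"
  define z where "z = g r s"
  have N0: "real N > 0" using s by auto
  have z: "1 \<le> z" "z \<le> N" using gr r by (auto simp: z_def)
  have subj: "inner_d d (E1 N R g (Inl y)) Ou = 6 * real z * real y - 3 * (real y)^2" for y
  proof -
    have "inner_d d (E1 N R g (Inl y)) Ou = E1 N R g (Inl y) 0 * Ou 0 + E1 N R g (Inl y) 1 * Ou 1"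
      unfolding inner_d_def
      by (rule sum_two) (use d r in \<open>auto simp: E1_def Ou_def\<close>)
    then show ?thesis using r by (simp add: E1_def Ou_def z_def)
  qed
  have rel: "inner_d d (E1 N R g (Inr r')) Ou \<le> 2" if r': "r' \<in> {1..R}" for r'
  proof -
    have "inner_d d (E1 N R g (Inr r')) Ou = Ou (R+1+r')"
      unfolding inner_d_def using d r' by (simp add: E1_def sum_delta_mult)
    also have "... = real (g r' s) / real N + (if r' = r then 1 else 0)"
      using r' by (simp add: Ou_def)
    also have "... \<le> 1 + 1"
    proof -
      have "g r' s \<le> N" using gr r' by auto
      then have a: "real (g r' s) / real N \<le> 1" using N0 by simp
      show ?thesis by (cases "r' = r") (use a in auto)
    qed
    finally show ?thesis by simp
  qed
  have top: "inner_d d (E1 N R g (Inl z)) Ou = 3 * (real z)^2" by (simp add: subj power2_eq_square)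
  have top3: "3 \<le> 3 * (real z)^2" using z by simp
  have eqO: "tf_mlp_out d R (E1 N R g) Zm Zm (WO1 N R) Idm (W11 N R) (b11 N) Idm (\<lambda>k. 0) W31 b31 (Inl s) (Inr r) = Ou"
    unfolding Ou_def by (rule out1) (rule d, rule s, rule r, rule gr)
  show ?thesis
    unfolding predicts_def eqO z_def[symmetric]
  proof
    fix v assume v: "v \<in> vocab N R"
    show "v \<noteq> Inl z \<longrightarrow> inner_d d (E1 N R g v) Ou < inner_d d (E1 N R g (Inl z)) Ou"
    proof
      assume vz: "v \<noteq> Inl z"
      from v consider (l) y where "v = Inl y" "y \<in> {1..N}" | (rr) r' where "v = Inr r'" "r' \<in> {1..R}"
        unfolding vocab_def by auto
      then show "inner_d d (E1 N R g v) Ou < inner_d d (E1 N R g (Inl z)) Ou"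
      proof cases
        case l
        then have "y \<noteq> z" using vz by auto
        then have "(real y - real z)^2 > 0" by simp
        then show ?thesis unfolding l(1) top subj by (simp add: power2_eq_square algebra_simps)
      next
        case rr
        then show ?thesis using rel[OF rr(2)] top top3 by simp
      qed
    qed
  qed
qed


theorem theorem1:
  fixes N R :: nat and g :: "nat \<Rightarrow> nat \<Rightarrow> nat"
  assumes N2: "N \<ge> 2"
    and bij: "\<forall>r\<in>{1..R}. bij_betw (g r) {1..N} {1..N}"
  shows
    "(let d = nat \<lceil>4 * real R * ln (real N)\<rceil> + 1 in
       \<exists>E WK WQ WO V W1 b1 W2 b2 W3 b3.
         \<forall>s\<in>{1..N}. \<forall>r\<in>{1..R}.
           predicts d (vocab N R) E
             (tf_mlp_out d R E WK WQ WO V W1 b1 W2 b2 W3 b3 (Inl s) (Inr r)) (Inl (g r s)))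
     \<and>
     (let dh = nat \<lceil>4 * ln (real N)\<rceil>;
          d = R * dh + nat \<lceil>4 * ln (real R)\<rceil> + 1 in
       \<exists>E WK WQ WO V.
         \<forall>s\<in>{1..N}. \<forall>r\<in>{1..R}.
           predicts d (vocab N R) E
             (tf_mha_out d dh R E WK WQ WO V (Inl s) (Inr r)) (Inl (g r s)))"
proof -
  have gr: "\<forall>h\<in>{1..R}. g h s \<in> {1..N}" if s: "s \<in> {1..N}" for s
  proof
    fix h assume h: "h \<in> {1..R}"
    then have "bij_betw (g h) {1..N} {1..N}" using bij by blast
    then show "g h s \<in> {1..N}" using s by (rule bij_betw_apply)
  qed
  have P1: "\<exists>E WK WQ WO V W1 b1 W2 b2 W3 b3.
         \<forall>s\<in>{1..N}. \<forall>r\<in>{1..R}.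
           predicts (nat \<lceil>4 * real R * ln (real N)\<rceil> + 1) (vocab N R) E
             (tf_mlp_out (nat \<lceil>4 * real R * ln (real N)\<rceil> + 1) R E WK WQ WO V W1 b1 W2 b2 W3 b3 (Inl s) (Inr r)) (Inl (g r s))"
  proof (intro exI ballI)
    fix s r assume s: "s \<in> {1..N}" and r: "r \<in> {1..R}"
    have d: "2*R+2 \<le> nat \<lceil>4 * real R * ln (real N)\<rceil> + 1"
      using d1_bound[OF N2] r by auto
    show "predicts (nat \<lceil>4 * real R * ln (real N)\<rceil> + 1) (vocab N R) (E1 N R g)
             (tf_mlp_out (nat \<lceil>4 * real R * ln (real N)\<rceil> + 1) R (E1 N R g) Zm Zm (WO1 N R) Idm (W11 N R) (b11 N) Idm (\<lambda>k. 0) W31 b31 (Inl s) (Inr r)) (Inl (g r s))"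
      by (rule pred1) (rule d, rule s, rule r, rule gr[OF s])
  qed
  have P2: "\<exists>E WK WQ WO V.
         \<forall>s\<in>{1..N}. \<forall>r\<in>{1..R}.
           predicts (R * nat \<lceil>4 * ln (real N)\<rceil> + nat \<lceil>4 * ln (real R)\<rceil> + 1) (vocab N R) E
             (tf_mha_out (R * nat \<lceil>4 * ln (real N)\<rceil> + nat \<lceil>4 * ln (real R)\<rceil> + 1) (nat \<lceil>4 * ln (real N)\<rceil>) R E WK WQ WO V (Inl s) (Inr r)) (Inl (g r s))"
  proof (intro exI ballI)
    fix s r assume s: "s \<in> {1..N}" and r: "r \<in> {1..R}"
    have d: "2*R+2 \<le> R * nat \<lceil>4 * ln (real N)\<rceil> + nat \<lceil>4 * ln (real R)\<rceil> + 1"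
      using d2_bound[OF N2] r by auto
    have dh: "2 \<le> nat \<lceil>4 * ln (real N)\<rceil>" using dh_bound[OF N2] by linarith
    show "predicts (R * nat \<lceil>4 * ln (real N)\<rceil> + nat \<lceil>4 * ln (real R)\<rceil> + 1) (vocab N R) (E2 N R g)
             (tf_mha_out (R * nat \<lceil>4 * ln (real N)\<rceil> + nat \<lceil>4 * ln (real R)\<rceil> + 1) (nat \<lceil>4 * ln (real N)\<rceil>) R (E2 N R g) (WK2 R) (WQ2 (4 * real R * real N) R) WO2 V2 (Inl s) (Inr r)) (Inl (g r s))"
      by (rule pred2) (rule d, rule dh, rule s, rule r, rule gr[OF s], rule refl)
  qed
  show ?thesis using P1 P2 by (simp only: Let_def)
qed

end
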